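(* In the session calculus, weak fairness of instructions (WI) coincides with justness (J): a path is WI-fair iff it is just.
   Context: Session calculus: threads $P ::= \mathbf{end} \mid \bigoplus_{i\in I} p_i!\lambda_i;P_i \mid \sum_{i\in I} p_i?\lambda_i;P_i \mid X \mid \mu X.P$ (guarded recursion), thread states additionally $\langle q!\lambda\rangle;P$; networks $p[\![P]\!]\mid 0\mid N\parallel N$ with distinct locations and closed threads, modulo associativity/commutativity/unit. Transitions: (choice) $p[\![\bigoplus_{i\in I}p_i!\lambda_i;P_i]\!]\parallel N \xrightarrow{\tau} p[\![\langle p_k!\lambda_k\rangle;P_k]\!]\parallel N$; (unfold) $p[\![\mu X.P]\!]\parallel N\xrightarrow{\tau} p[\![P\{\mu X.P/X\}]\!]\parallel N$; (comm) $p_k[\![\langle q!\lambda_k\rangle;Q]\!]\parallel q[\![\sum_{i\in I}p_i?\lambda_i;P_i]\!]\parallel N \xrightarrow{(p_k,\lambda_k,q)} p_k[\![Q]\!]\parallel q[\![P_k]\!]\parallel N$. $\mathrm{comp}(t)$ is the moving location for a $\tau$-transition and $\{p,q\}$ for label $(p,\lambda,q)$; $t,u$ are concurrent if $\mathrm{comp}(t)\cap\mathrm{comp}(u)=\emptyset$. A path is a network state with a maximal sequence of transitions. Instructions: the occurrences of subexpressions $p_k!\lambda_k$, $p_k?\lambda_k$ or $\mu X$ in the network expression; each $\tau$-transition stems from exactly one instruction and each communication transition from exactly two (output and matching input); $\mathrm{instr}(t)$ is this set. An instruction $I$ is enabled in $N$ if some transition $t$ from $N$ has $I\in\mathrm{instr}(t)$,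 perpetually enabled on a path if enabled in all its states, and engaged in by a path containing such a $t$. A path $\pi$ is WI-fair if for every suffix $\pi'$, every instruction perpetually enabled on $\pi'$ is engaged in by $\pi'$. A path $\pi$ is just if for every suffix starting in state $s$ and every transition $t$ enabled in $s$, that suffix contains a transition $u$ not concurrent with $t$. *)

theory Defs
  imports Main "HOL-Library.Extended_Nat"
begin

text \<open>Threads over locations (participants) 'p, labels 'l and instruction tags 't.
  Every instruction occurrence (an output p!l in an internal choice, an input p?l in an
  external choice, a binder \<mu>X) carries a tag of type 't naming that occurrence.
  Sel bs  = internal choice (+)_{i} p_i!l_i;P_i  (branches: tag, p_i, l_i, P_i)
  Brn bs  = external choice Sum_{i} p_i?l_i;P_i
  Snd i q l P = the thread state <q!l>;P (i is the tag of the output occurrence).\<close>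

datatype ('p, 'l, 't) thr =
    End
  | Sel "('t \<times> 'p \<times> 'l \<times> ('p, 'l, 't) thr) list"
  | Brn "('t \<times> 'p \<times> 'l \<times> ('p, 'l, 't) thr) list"
  | Var nat
  | Mu 't nat "('p, 'l, 't) thr"
  | Snd 't 'p 'l "('p, 'l, 't) thr"

text \<open>Networks: finite partial maps from locations to thread states
  (this represents p1[[P1]] || ... || pn[[Pn]] modulo AC and unit, with distinct locations).\<close>
type_synonym ('p, 'l, 't) net = "'p \<Rightarrow> ('p, 'l, 't) thr option"

fun tags :: "('p, 'l, 't) thr \<Rightarrow> 't list" where
  "tags End = []"
| "tags (Sel bs) = concat (map (\<lambda>(i, q, l, P). i # tags P) bs)"
| "tags (Brn bs) = concat (map (\<lambda>(i, q, l, P). i # tags P) bs)"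
| "tags (Var x) = []"
| "tags (Mu i x P) = i # tags P"
| "tags (Snd i q l P) = i # tags P"

fun fv :: "('p, 'l, 't) thr \<Rightarrow> nat set" where
  "fv End = {}"
| "fv (Sel bs) = (\<Union>(i, q, l, P) \<in> set bs. fv P)"
| "fv (Brn bs) = (\<Union>(i, q, l, P) \<in> set bs. fv P)"
| "fv (Var x) = {x}"
| "fv (Mu i x P) = fv P - {x}"
| "fv (Snd i q l P) = fv P"

fun unguarded :: "('p, 'l, 't) thr \<Rightarrow> nat set" where
  "unguarded End = {}"
| "unguarded (Sel bs) = {}"
| "unguarded (Brn bs) = {}"
| "unguarded (Var x) = {x}"
| "unguarded (Mu i x P) = unguarded P - {x}"
| "unguarded (Snd i q l P) = {}"

fun guarded :: "('p, 'l, 't) thr \<Rightarrow> bool" where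
  "guarded End = True"
| "guarded (Sel bs) = (\<forall>(i, q, l, P) \<in> set bs. guarded P)"
| "guarded (Brn bs) = (\<forall>(i, q, l, P) \<in> set bs. guarded P)"
| "guarded (Var x) = True"
| "guarded (Mu i x P) = (x \<notin> unguarded P \<and> guarded P)"
| "guarded (Snd i q l P) = guarded P"

fun plain :: "('p, 'l, 't) thr \<Rightarrow> bool" where
  "plain End = True"
| "plain (Sel bs) = (\<forall>(i, q, l, P) \<in> set bs. plain P)"
| "plain (Brn bs) = (\<forall>(i, q, l, P) \<in> set bs. plain P)"
| "plain (Var x) = True"
| "plain (Mu i x P) = plain P"
| "plain (Snd i q l P) = False"

definition thread_state :: "('p, 'l, 't) thr \<Rightarrow> bool" where
  "thread_state P \<longleftrightarrow> plain P \<or> (\<exists>i q l Q. P = Snd i q l Q \<and> plain Q)"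

text \<open>Substitution P{Q/X} (only used with closed Q, so no capture).\<close>
fun subst :: "nat \<Rightarrow> ('p, 'l, 't) thr \<Rightarrow> ('p, 'l, 't) thr \<Rightarrow> ('p, 'l, 't) thr" where
  "subst x Q End = End"
| "subst x Q (Sel bs) = Sel (map (\<lambda>(i, q, l, P). (i, q, l, subst x Q P)) bs)"
| "subst x Q (Brn bs) = Brn (map (\<lambda>(i, q, l, P). (i, q, l, subst x Q P)) bs)"
| "subst x Q (Var y) = (if y = x then Q else Var y)"
| "subst x Q (Mu i y P) = (if y = x then Mu i y P else Mu i y (subst x Q P))"
| "subst x Q (Snd i q l P) = Snd i q l (subst x Q P)"

datatype ('p, 'l) act = Tau 'p | Com 'p 'l 'p

fun comp :: "('p, 'l) act \<Rightarrow> 'p set" where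
  "comp (Tau p) = {p}"
| "comp (Com p l q) = {p, q}"

text \<open>step N a J N': a transition from N with action a, stemming from the set J of
  instructions (tags), leading to N'.\<close>
inductive step :: "('p, 'l, 't) net \<Rightarrow> ('p, 'l) act \<Rightarrow> 't set \<Rightarrow> ('p, 'l, 't) net \<Rightarrow> bool" where
  choice: "\<lbrakk> N p = Some (Sel bs); k < length bs; bs ! k = (i, q, l, P) \<rbrakk>
           \<Longrightarrow> step N (Tau p) {i} (N(p \<mapsto> Snd i q l P))"
| unfold: "N p = Some (Mu i x P)
           \<Longrightarrow> step N (Tau p) {i} (N(p \<mapsto> subst x (Mu i x P) P))"
| comm: "\<lbrakk> p \<noteq> q; N p = Some (Snd i q l Q); N q = Some (Brn bs); k < length bs;
           bs ! k = (j, p, l, P) \<rbrakk>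
           \<Longrightarrow> step N (Com p l q) {i, j} (N(p \<mapsto> Q, q \<mapsto> P))"

text \<open>A network state: finitely many located, closed, guarded thread states, and each
  instruction occurrence carries its own tag (tags are pairwise distinct, within a thread
  and across locations), so that tags name the occurrences of the network expression.\<close>
definition wf_net :: "('p, 'l, 't) net \<Rightarrow> bool" where
  "wf_net N \<longleftrightarrow> finite (dom N)
     \<and> (\<forall>p P. N p = Some P \<longrightarrow> thread_state P \<and> fv P = {} \<and> guarded P \<and> distinct (tags P))
     \<and> (\<forall>p q P Q. p \<noteq> q \<longrightarrow> N p = Some P \<longrightarrow> N q = Some Q \<longrightarrow> set (tags P) \<inter> set (tags Q) = {})"

text \<open>A path: states s 0, s 1, ... and transitions tr i = (action, instructions) from s i to
  s (Suc i), for i < n (n = \<infinity> for infinite paths); maximal: if n is finite, then no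
  transition is possible from the last state.\<close>
definition is_path :: "(nat \<Rightarrow> ('p, 'l, 't) net) \<Rightarrow> (nat \<Rightarrow> ('p, 'l) act \<times> 't set) \<Rightarrow> enat \<Rightarrow> bool" where
  "is_path s tr n \<longleftrightarrow>
     (\<forall>i. enat i < n \<longrightarrow> step (s i) (fst (tr i)) (snd (tr i)) (s (Suc i)))
   \<and> (\<forall>m. n = enat m \<longrightarrow> \<not> (\<exists>a J N'. step (s m) a J N'))"

definition enabled :: "'t \<Rightarrow> ('p, 'l, 't) net \<Rightarrow> bool" where
  "enabled I N \<longleftrightarrow> (\<exists>a J N'. step N a J N' \<and> I \<in> J)"

definition perp_enabled :: "(nat \<Rightarrow> ('p, 'l, 't) net) \<Rightarrow> enat \<Rightarrow> nat \<Rightarrow> 't \<Rightarrow> bool" where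
  "perp_enabled s n k I \<longleftrightarrow> (\<forall>j. k \<le> j \<longrightarrow> enat j \<le> n \<longrightarrow> enabled I (s j))"

definition engaged :: "(nat \<Rightarrow> ('p, 'l) act \<times> 't set) \<Rightarrow> enat \<Rightarrow> nat \<Rightarrow> 't \<Rightarrow> bool" where
  "engaged tr n k I \<longleftrightarrow> (\<exists>j. k \<le> j \<and> enat j < n \<and> I \<in> snd (tr j))"

definition WI_fair :: "(nat \<Rightarrow> ('p, 'l, 't) net) \<Rightarrow> (nat \<Rightarrow> ('p, 'l) act \<times> 't set) \<Rightarrow> enat \<Rightarrow> bool" where
  "WI_fair s tr n \<longleftrightarrow>
     (\<forall>k. enat k \<le> n \<longrightarrow> (\<forall>I. perp_enabled s n k I \<longrightarrow> engaged tr n k I))"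

definition just :: "(nat \<Rightarrow> ('p, 'l, 't) net) \<Rightarrow> (nat \<Rightarrow> ('p, 'l) act \<times> 't set) \<Rightarrow> enat \<Rightarrow> bool" where
  "just s tr n \<longleftrightarrow>
     (\<forall>k. enat k \<le> n \<longrightarrow> (\<forall>a J N'. step (s k) a J N' \<longrightarrow>
        (\<exists>j. k \<le> j \<and> enat j < n \<and> comp (fst (tr j)) \<inter> comp a \<noteq> {})))"

end

theory Submission
  imports Defs
begin


fun topT :: "('p, 'l, 't) thr \<Rightarrow> 't set" where
  "topT (Sel bs) = fst ` set bs"
| "topT (Brn bs) = fst ` set bs"
| "topT (Mu i x P) = {i}"
| "topT (Snd i q l P) = {i}"
| "topT End = {}"
| "topT (Var x) = {}"

fun xt :: "nat \<Rightarrow> ('p, 'l, 't) thr \<Rightarrow> 't set" where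
  "xt x End = {}"
| "xt x (Sel bs) = (\<Union>(i, q, l, P) \<in> set bs. xt x P)"
| "xt x (Brn bs) = (if (\<exists>(i, q, l, P) \<in> set bs. P = Var x) then fst ` set bs else {})
                   \<union> (\<Union>(i, q, l, P) \<in> set bs. xt x P)"
| "xt x (Var y) = {}"
| "xt x (Mu i y P) = (if y = x then {} else xt x P)"
| "xt x (Snd i q l P) = xt x P"

fun okT :: "('p, 'l, 't) thr \<Rightarrow> bool" where
  "okT End = True"
| "okT (Sel bs) = (\<forall>(i, q, l, P) \<in> set bs. okT P)"
| "okT (Brn bs) = ((\<forall>(i, q, l, P) \<in> set bs. \<forall>(i', q', l', P') \<in> set bs. i' \<notin> topT P)
                   \<and> (\<forall>(i, q, l, P) \<in> set bs. okT P))"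
| "okT (Var x) = True"
| "okT (Mu i x P) = (i \<notin> xt x P \<and> okT P)"
| "okT (Snd i q l P) = okT P"

lemma set_tags_list: "set (concat (map (\<lambda>(i, q, l, P). i # tags P) bs)) = (\<Union>(i, q, l, P) \<in> set bs. insert i (set (tags P)))"
  by (induct bs) auto

lemma mem_tags_Sel: "(i, q, l, P) \<in> set bs \<Longrightarrow> insert i (set (tags P)) \<subseteq> set (tags (Sel bs))"
  unfolding tags.simps set_tags_list by blast
lemma mem_tags_Brn: "(i, q, l, P) \<in> set bs \<Longrightarrow> insert i (set (tags P)) \<subseteq> set (tags (Brn bs))"
  unfolding tags.simps set_tags_list by blast


lemma topT_tags: "topT T \<subseteq> set (tags T)"
proof (cases T)
  case (Sel bs)
  show ?thesis unfolding Sel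
  proof
    fix a assume "a \<in> topT (Sel bs)"
    then obtain i q l P where b: "(i, q, l, P) \<in> set bs" "a = i" by auto
    show "a \<in> set (tags (Sel bs))" using mem_tags_Sel[OF b(1)] b(2) by blast
  qed
next
  case (Brn bs)
  show ?thesis unfolding Brn
  proof
    fix a assume "a \<in> topT (Brn bs)"
    then obtain i q l P where b: "(i, q, l, P) \<in> set bs" "a = i" by auto
    show "a \<in> set (tags (Brn bs))" using mem_tags_Brn[OF b(1)] b(2) by blast
  qed
qed auto

lemma xt_tags: "xt x T \<subseteq> set (tags T)"
proof (induction x T rule: xt.induct)
  case (2 x bs)
  show ?case
  proof
    fix a assume "a \<in> xt x (Sel bs)"
    then obtain i q l P where b: "(i, q, l, P) \<in> set bs" "a \<in> xt x P" by auto
    then have "a \<in> set (tags P)" using 2 by blast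
    then show "a \<in> set (tags (Sel bs))" using mem_tags_Sel[OF b(1)] by blast
  qed
next
  case (3 x bs)
  show ?case
  proof
    fix a assume "a \<in> xt x (Brn bs)"
    then consider "a \<in> fst ` set bs" | i q l P where "(i, q, l, P) \<in> set bs" "a \<in> xt x P"
      by (auto split: if_splits)
    then show "a \<in> set (tags (Brn bs))"
    proof cases
      case 1
      then obtain i q l P where b: "(i, q, l, P) \<in> set bs" "a = i" by auto
      show ?thesis using mem_tags_Brn[OF b(1)] b(2) by blast
    next
      case (2 i q l P)
      then have "a \<in> set (tags P)" using 3 by blast
      then show ?thesis using mem_tags_Brn[OF 2(1)] by blast
    qed
  qed
qed auto

lemma xt_fv: "x \<notin> fv T \<Longrightarrow> xt x T = {}"
proof (induction x T rule: xt.induct)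
  case (2 x bs)
  then show ?case by fastforce
next
  case (3 x bs)
  have nv: "\<not> (\<exists>(i, q, l, P) \<in> set bs. P = Var x)" using 3(2) by force
  have "\<forall>(i, q, l, P) \<in> set bs. xt x P = {}" using 3 by fastforce
  then show ?case using nv by auto
qed auto

lemma topT_subst: "topT (subst x M P) = (if P = Var x then topT M else topT P)"
  by (cases P) (auto simp: image_image case_prod_beta)

lemma fv_subst: "fv M = {} \<Longrightarrow> fv (subst x M P) = fv P - {x}"
proof (induction x M P rule: subst.induct)
  case (2 x bs)
  then show ?case by fastforce
next
  case (3 x bs)
  then show ?case by fastforce
qed auto

lemma ball4I: "(\<And>i q l P. (i, q, l, P) \<in> set bs \<Longrightarrow> F i q l P) \<Longrightarrow> \<forall>(i, q, l, P) \<in> set bs. F i q l P"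
  by auto
lemma ball4D: "\<forall>(i, q, l, P) \<in> set bs. F i q l P \<Longrightarrow> (i, q, l, P) \<in> set bs \<Longrightarrow> F i q l P"
  by auto
lemma mem_map_subst: "(i, q, l, P') \<in> set (map (\<lambda>(i, q, l, P). (i, q, l, subst x M P)) bs)
   \<Longrightarrow> \<exists>P. (i, q, l, P) \<in> set bs \<and> P' = subst x M P"
  by auto
lemma mem_map_substI: "(i, q, l, P) \<in> set bs
   \<Longrightarrow> (i, q, l, subst x M P) \<in> set (map (\<lambda>(i, q, l, P). (i, q, l, subst x M P)) bs)"
  by force
lemma fst_map_subst: "fst ` set (map (\<lambda>(i, q, l, P). (i, q, l, subst x M P)) bs) = fst ` set bs"
  by (auto simp: image_image case_prod_beta)
lemma UN4_mono: "(\<And>i q l P. (i, q, l, P) \<in> set bs \<Longrightarrow> F i q l P \<subseteq> G i q l P) \<Longrightarrow>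
  (\<Union>(i, q, l, P) \<in> set bs. F i q l P) \<subseteq> (\<Union>(i, q, l, P) \<in> set bs. G i q l P)"
proof (rule UN_mono[OF order_refl])
  fix b assume "\<And>i q l P. (i, q, l, P) \<in> set bs \<Longrightarrow> F i q l P \<subseteq> G i q l P" "b \<in> set bs"
  then show "(case b of (i, q, l, P) \<Rightarrow> F i q l P) \<subseteq> (case b of (i, q, l, P) \<Rightarrow> G i q l P)"
    by (cases b) auto
qed
lemma UN_map_subst: "(\<Union>(i, q, l, P) \<in> set (map (\<lambda>(i, q, l, P). (i, q, l, subst x M P)) bs). F i q l P)
   = (\<Union>(i, q, l, P) \<in> set bs. F i q l (subst x M P))"
  by (auto simp: image_image case_prod_beta)
lemma UN4_iff: "a \<in> (\<Union>(i, q, l, P) \<in> set bs. F i q l P) \<longleftrightarrow> (\<exists>i q l P. (i, q, l, P) \<in> set bs \<and> a \<in> F i q l P)"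
  by auto
lemma subst_Var: "fv M = {} \<Longrightarrow> subst x M P = Var y \<Longrightarrow> P = Var y"
  by (cases P) (auto split: if_splits)



lemma tags_subst: "set (tags (subst x M P)) \<subseteq> set (tags M) \<union> set (tags P)"
proof (induction x M P rule: subst.induct)
  case (2 x M bs)
  show ?case
  proof
    fix a assume "a \<in> set (tags (subst x M (Sel bs)))"
    then have "a \<in> (\<Union>(i, q, l, P) \<in> set (map (\<lambda>(i, q, l, P). (i, q, l, subst x M P)) bs). insert i (set (tags P)))"
      by (simp only: subst.simps tags.simps set_tags_list)
    then obtain i q l P where b: "(i, q, l, P) \<in> set bs" "a \<in> insert i (set (tags (subst x M P)))"
      unfolding UN_map_subst UN4_iff by blast
    have ih: "set (tags (subst x M P)) \<subseteq> set (tags M) \<union> set (tags P)" using "2.IH"[OF b(1) refl refl refl] .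
    show "a \<in> set (tags M) \<union> set (tags (Sel bs))" using b(2) ih mem_tags_Sel[OF b(1)] by blast
  qed
next
  case (3 x M bs)
  show ?case
  proof
    fix a assume "a \<in> set (tags (subst x M (Brn bs)))"
    then have "a \<in> (\<Union>(i, q, l, P) \<in> set (map (\<lambda>(i, q, l, P). (i, q, l, subst x M P)) bs). insert i (set (tags P)))"
      by (simp only: subst.simps tags.simps set_tags_list)
    then obtain i q l P where b: "(i, q, l, P) \<in> set bs" "a \<in> insert i (set (tags (subst x M P)))"
      unfolding UN_map_subst UN4_iff by blast
    have ih: "set (tags (subst x M P)) \<subseteq> set (tags M) \<union> set (tags P)" using "3.IH"[OF b(1) refl refl refl] .
    show "a \<in> set (tags M) \<union> set (tags (Brn bs))" using b(2) ih mem_tags_Brn[OF b(1)] by blast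
  qed
qed auto

lemma xt_subst: "y \<noteq> x \<Longrightarrow> fv M = {} \<Longrightarrow> xt y (subst x M Q) \<subseteq> xt y Q"
proof (induction x M Q rule: subst.induct)
  case (2 x M bs)
  have "xt y (subst x M (Sel bs)) = (\<Union>(i, q, l, P) \<in> set bs. xt y (subst x M P))"
    by (simp only: subst.simps xt.simps UN_map_subst)
  also have "\<dots> \<subseteq> (\<Union>(i, q, l, P) \<in> set bs. xt y P)"
    by (rule UN4_mono) (rule "2.IH"[OF _ refl refl refl]; use 2 in auto)
  finally show ?case by simp
next
  case (3 x M bs)
  have e: "(\<exists>(i, q, l, P) \<in> set (map (\<lambda>(i, q, l, P). (i, q, l, subst x M P)) bs). P = Var y)
       \<Longrightarrow> (\<exists>(i, q, l, P) \<in> set bs. P = Var y)"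
  proof -
    assume "\<exists>(i, q, l, P) \<in> set (map (\<lambda>(i, q, l, P). (i, q, l, subst x M P)) bs). P = Var y"
    then obtain i q l P' where b: "(i, q, l, P') \<in> set (map (\<lambda>(i, q, l, P). (i, q, l, subst x M P)) bs)" "P' = Var y"
      by blast
    obtain P0 where "(i, q, l, P0) \<in> set bs" "P' = subst x M P0" using mem_map_subst[OF b(1)] by blast
    then show ?thesis using subst_Var[OF 3(3)] b(2) by fastforce
  qed
  have "(\<Union>(i, q, l, P) \<in> set bs. xt y (subst x M P)) \<subseteq> (\<Union>(i, q, l, P) \<in> set bs. xt y P)"
    by (rule UN4_mono) (rule "3.IH"[OF _ refl refl refl]; use 3 in auto)
  then show ?case using e
    by (simp only: subst.simps xt.simps UN_map_subst fst_map_subst) (auto split: if_splits)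
next
  case (4 x M z)
  then show ?case using xt_fv[of y M] by auto
qed auto

lemma okT_subst: "okT M \<Longrightarrow> fv M = {} \<Longrightarrow> topT M \<subseteq> A \<Longrightarrow> okT Q \<Longrightarrow> A \<inter> xt x Q = {}
  \<Longrightarrow> okT (subst x M Q)"
proof (induction x M Q rule: subst.induct)
  case (2 x M bs)
  have "okT (subst x M P)" if b: "(i, q, l, P) \<in> set bs" for i q l P
  proof (rule "2.IH"[OF b refl refl refl])
    show "okT P" using 2(5) b by auto
    show "A \<inter> xt x P = {}" using 2(6) b by auto
  qed (use 2 in auto)
  then show ?case by (auto)
next
  case (3 x M bs)
  have c1: "okT (subst x M P)" if b: "(i, q, l, P) \<in> set bs" for i q l P
  proof (rule "3.IH"[OF b refl refl refl])
    show "okT P" using 3(5) b by auto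
    show "A \<inter> xt x P = {}" using 3(6) b by auto
  qed (use 3 in auto)
  have c2: "i' \<notin> topT (subst x M P)" if b: "(i, q, l, P) \<in> set bs" and b': "(i', q', l', P') \<in> set bs"
    for i q l P i' q' l' P'
  proof (cases "P = Var x")
    case True
    then have "i' \<in> xt x (Brn bs)" using b b' by force
    then have "i' \<notin> A" using 3(6) by blast
    then show ?thesis using True 3(4) by (auto simp: topT_subst)
  next
    case False
    have "i' \<notin> topT P" using 3(5) b b' by force
    then show ?thesis using False by (simp add: topT_subst)
  qed
  have g: "okT (Brn (map (\<lambda>(i, q, l, P). (i, q, l, subst x M P)) bs))"
    unfolding okT.simps
  proof
    show "\<forall>(i, q, l, P) \<in> set (map (\<lambda>(i, q, l, P). (i, q, l, subst x M P)) bs).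
            \<forall>(i', q', l', P') \<in> set (map (\<lambda>(i, q, l, P). (i, q, l, subst x M P)) bs). i' \<notin> topT P"
    proof (intro ball4I)
      fix i q l P i' q' l' P'
      assume b: "(i, q, l, P) \<in> set (map (\<lambda>(i, q, l, P). (i, q, l, subst x M P)) bs)"
        and b': "(i', q', l', P') \<in> set (map (\<lambda>(i, q, l, P). (i, q, l, subst x M P)) bs)"
      obtain P0 where "(i, q, l, P0) \<in> set bs" "P = subst x M P0" using mem_map_subst[OF b] by blast
      moreover obtain P0' where "(i', q', l', P0') \<in> set bs" using mem_map_subst[OF b'] by blast
      ultimately show "i' \<notin> topT P" using c2 by blast
    qed
    show "\<forall>(i, q, l, P) \<in> set (map (\<lambda>(i, q, l, P). (i, q, l, subst x M P)) bs). okT P"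
    proof (intro ball4I)
      fix i q l P
      assume b: "(i, q, l, P) \<in> set (map (\<lambda>(i, q, l, P). (i, q, l, subst x M P)) bs)"
      obtain P0 where "(i, q, l, P0) \<in> set bs" "P = subst x M P0" using mem_map_subst[OF b] by blast
      then show "okT P" using c1 by blast
    qed
  qed
  then show ?case by simp
next
  case (5 x M i y P)
  show ?case
  proof (cases "y = x")
    case True
    then show ?thesis using 5 by simp
  next
    case False
    have "okT (subst x M P)" using 5 False by auto
    moreover have "i \<notin> xt y (subst x M P)" using 5(5) xt_subst[OF False 5(3)] False by auto
    ultimately show ?thesis using False by simp
  qed
qed auto

lemma distinct_okT: "distinct (tags T) \<Longrightarrow> okT T"
proof (induction T rule: okT.induct)
  case (2 bs)
  have "okT P" if b: "(i, q, l, P) \<in> set bs" for i q l P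
  proof (rule "2.IH"[OF b refl refl refl])
    have "i # tags P \<in> set (map (\<lambda>(i, q, l, P). i # tags P) bs)" using b by force
    moreover have "distinct (concat (map (\<lambda>(i, q, l, P). i # tags P) bs))" using 2(2) by simp
    ultimately have "distinct (i # tags P)" unfolding distinct_concat_iff by blast
    then show "distinct (tags P)" by simp
  qed
  then show ?case by auto
next
  case (3 bs)
  let ?f = "\<lambda>(i, q, l, P). i # tags P"
  have d: "distinct (concat (map ?f bs))" using 3(2) by simp
  have c1: "okT P" if b: "(i, q, l, P) \<in> set bs" for i q l P
  proof (rule "3.IH"[OF b refl refl refl])
    have "i # tags P \<in> set (map ?f bs)" using b by force
    then have "distinct (i # tags P)" using d unfolding distinct_concat_iff by blast
    then show "distinct (tags P)" by simp
  qed
  have c2: "i' \<notin> topT P" if b: "(i, q, l, P) \<in> set bs" and b': "(i', q', l', P') \<in> set bs"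
    for i q l P i' q' l' P'
  proof
    assume "i' \<in> topT P"
    then have t: "i' \<in> set (tags P)" using topT_tags[of P] by blast
    have fb: "i # tags P \<in> set (map ?f bs)" using b by force
    have fb': "i' # tags P' \<in> set (map ?f bs)" using b' by force
    show False
    proof (cases "i # tags P = i' # tags P'")
      case True
      then have "i = i'" by simp
      moreover have "distinct (i # tags P)" using d fb unfolding distinct_concat_iff by blast
      ultimately show False using t by simp
    next
      case False
      then have "set (i # tags P) \<inter> set (i' # tags P') = {}"
        using d fb fb' unfolding distinct_concat_iff by blast
      then show False using t by auto
    qed
  qed
  show ?case unfolding okT.simps
    by (intro conjI ball4I) (use c1 c2 in blast)+
next
  case (5 i x P)
  then show ?case using xt_tags[of x P] by auto
qed auto



definition Inv :: "('p, 'l, 't) net \<Rightarrow> ('p, 'l, 't) net \<Rightarrow> bool" where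
  "Inv N0 N \<longleftrightarrow> (\<forall>p T. N p = Some T \<longrightarrow>
     (\<exists>T0. N0 p = Some T0 \<and> set (tags T) \<subseteq> set (tags T0)) \<and> okT T \<and> fv T = {})"

lemma wf_Inv: "wf_net N0 \<Longrightarrow> Inv N0 N0"
  unfolding wf_net_def Inv_def using distinct_okT by blast

lemma fv_Sel_mem: "(i, q, l, P) \<in> set bs \<Longrightarrow> fv P \<subseteq> fv (Sel bs)"
  unfolding fv.simps UN4_iff by blast
lemma fv_Brn_mem: "(i, q, l, P) \<in> set bs \<Longrightarrow> fv P \<subseteq> fv (Brn bs)"
  unfolding fv.simps UN4_iff by blast

lemma size_Brn_mem: "(i, q, l, P) \<in> set bs \<Longrightarrow> size P < size (Brn bs)"
  by (induct bs) auto

lemma step_Inv: "step N a J N' \<Longrightarrow> Inv N0 N \<Longrightarrow> Inv N0 N'"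
proof (induction rule: step.induct)
  case (choice N p bs k i q l P)
  have b: "(i, q, l, P) \<in> set bs" using choice(2,3) nth_mem by metis
  obtain T0 where T0: "N0 p = Some T0" "set (tags (Sel bs)) \<subseteq> set (tags T0)"
    and ok: "okT (Sel bs)" and fv: "fv (Sel bs) = {}"
    using choice(1,4) unfolding Inv_def by blast
  have "insert i (set (tags P)) \<subseteq> set (tags T0)" using mem_tags_Sel[OF b] T0(2) by (rule subset_trans)
  then have "set (tags (Snd i q l P)) \<subseteq> set (tags T0)" by simp
  moreover have "okT (Snd i q l P)" using ok b by auto
  moreover have "fv (Snd i q l P) = {}" using fv fv_Sel_mem[OF b] by simp
  ultimately show ?case using choice(4) T0(1) unfolding Inv_def by auto
next
  case (unfold N p i x P)
  obtain T0 where T0: "N0 p = Some T0" "set (tags (Mu i x P)) \<subseteq> set (tags T0)"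
    and ok: "okT (Mu i x P)" and fv: "fv (Mu i x P) = {}"
    using unfold unfolding Inv_def by blast
  have "set (tags (subst x (Mu i x P) P)) \<subseteq> set (tags T0)"
    using tags_subst[of x "Mu i x P" P] T0(2) by auto
  moreover have "okT (subst x (Mu i x P) P)"
    by (rule okT_subst[where A = "{i}"]) (use ok fv in auto)
  moreover have "fv (subst x (Mu i x P) P) = {}" using fv_subst[OF fv] fv by simp
  ultimately show ?case using unfold(2) T0(1) unfolding Inv_def by auto
next
  case (comm p q N i l Q bs k j P)
  have b: "(j, p, l, P) \<in> set bs" using comm(4,5) nth_mem by metis
  obtain T0 where T0: "N0 p = Some T0" "set (tags (Snd i q l Q)) \<subseteq> set (tags T0)"
    and ok: "okT (Snd i q l Q)" and fv: "fv (Snd i q l Q) = {}"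
    using comm unfolding Inv_def by blast
  obtain T1 where T1: "N0 q = Some T1" "set (tags (Brn bs)) \<subseteq> set (tags T1)"
    and ok1: "okT (Brn bs)" and fv1: "fv (Brn bs) = {}"
    using comm unfolding Inv_def by blast
  have "insert j (set (tags P)) \<subseteq> set (tags T1)" using mem_tags_Brn[OF b] T1(2) by (rule subset_trans)
  then have "set (tags P) \<subseteq> set (tags T1)" by simp
  moreover have "okT P" using ok1 b by auto
  moreover have "fv P = {}" using fv1 fv_Brn_mem[OF b] by simp
  moreover have "set (tags Q) \<subseteq> set (tags T0)" using T0(2) by auto
  ultimately show ?case using comm(6) T0(1) T1(1) ok fv unfolding Inv_def by auto
qed

lemma step_frame: "step N a J N' \<Longrightarrow> p \<notin> comp a \<Longrightarrow> N' p = N p"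
  by (induction rule: step.induct) auto

lemma step_some: "step N a J N' \<Longrightarrow> p \<in> comp a \<Longrightarrow> \<exists>T. N' p = Some T"
  by (induction rule: step.induct) auto

lemma step_J: "step N a J N' \<Longrightarrow> J \<noteq> {}"
  by (induction rule: step.induct) auto

lemma step_instr: "step N a J N' \<Longrightarrow> I \<in> J \<Longrightarrow> \<exists>p \<in> comp a. \<exists>T. N p = Some T \<and> I \<in> topT T"
proof (induction rule: step.induct)
  case (choice N p bs k i q l P)
  have "(i, q, l, P) \<in> set bs" using choice(2,3) nth_mem by metis
  then have "i \<in> fst ` set bs" by force
  then show ?case using choice by auto
next
  case (comm p q N i l Q bs k j P)
  have "(j, p, l, P) \<in> set bs" using comm(4,5) nth_mem by metis
  then have "j \<in> fst ` set bs" by force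
  then show ?case using comm by auto
qed auto

lemma step_local: "step N a J N' \<Longrightarrow> (\<forall>p \<in> comp a. M p = N p) \<Longrightarrow> \<exists>M'. step M a J M'"
proof (induction rule: step.induct)
  case (choice N p bs k i q l P)
  then show ?case using step.choice[of M p bs k i q l P] by auto
next
  case (unfold N p i x P)
  then show ?case using step.unfold[of M p i x P] by auto
next
  case (comm p q N i l Q bs k j P)
  then show ?case using step.comm[of p q M i l Q bs k j P] by auto
qed

lemma step_keep: "step N a J N' \<Longrightarrow> Inv N0 N \<Longrightarrow> N p = Some T \<Longrightarrow> I \<in> topT T \<Longrightarrow> I \<notin> J
  \<Longrightarrow> p \<in> comp a \<Longrightarrow> N' p = Some T' \<Longrightarrow> I \<notin> topT T'"
proof (induction rule: step.induct)
  case (choice N p0 bs k i q l P)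
  then show ?case by auto
next
  case (unfold N p0 i x P)
  then show ?case by auto
next
  case (comm p0 q0 N i l Q bs k j P)
  show ?case
  proof (cases "p = p0")
    case True
    then show ?thesis using comm by auto
  next
    case False
    then have pq: "p = q0" using comm.prems(5) by auto
    then have T: "T = Brn bs" "T' = P" using comm False by auto
    have b: "(j, p0, l, P) \<in> set bs" using comm(4,5) nth_mem by metis
    obtain i' q' l' P' where b': "(i', q', l', P') \<in> set bs" "I = i'" using comm(8) T by auto
    have "okT (Brn bs)" using comm(3) comm.prems(1) unfolding Inv_def by blast
    then have "\<forall>(i, q, l, P) \<in> set bs. \<forall>(i', q', l', P') \<in> set bs. i' \<notin> topT P" by simp
    then show ?thesis using b b' T by fastforce
  qed
qed

lemma uniq: "wf_net N0 \<Longrightarrow> Inv N0 N \<Longrightarrow> Inv N0 N' \<Longrightarrow> N p = Some T \<Longrightarrow> N' p' = Some T'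
  \<Longrightarrow> I \<in> set (tags T) \<Longrightarrow> I \<in> set (tags T') \<Longrightarrow> p = p'"
proof (rule ccontr)
  assume wf: "wf_net N0" and i: "Inv N0 N" "Inv N0 N'" and n: "N p = Some T" "N' p' = Some T'"
    and I: "I \<in> set (tags T)" "I \<in> set (tags T')" and ne: "p \<noteq> p'"
  obtain T0 where T0: "N0 p = Some T0" "set (tags T) \<subseteq> set (tags T0)" using i(1) n(1) unfolding Inv_def by blast
  obtain T1 where T1: "N0 p' = Some T1" "set (tags T') \<subseteq> set (tags T1)" using i(2) n(2) unfolding Inv_def by blast
  have "set (tags T0) \<inter> set (tags T1) = {}" using wf ne T0(1) T1(1) unfolding wf_net_def by blast
  then show False using I T0(2) T1(2) by blast
qed

lemma recv_move: "step N a J N' \<Longrightarrow> N q = Some (Brn bs) \<Longrightarrow> q \<in> comp a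
  \<Longrightarrow> \<exists>P. N' q = Some P \<and> size P < size (Brn bs)"
proof (induction rule: step.induct)
  case (comm p q0 N i l Q bs' k j P)
  then have "q = q0" by auto
  moreover have "(j, p, l, P) \<in> set bs'" using comm(4,5) nth_mem by metis
  ultimately show ?case using comm size_Brn_mem by fastforce
qed auto

lemma snd_move: "step N a J N' \<Longrightarrow> N p = Some (Snd i q l Q) \<Longrightarrow> p \<in> comp a \<Longrightarrow> q \<in> comp a"
  by (induction rule: step.induct) auto



lemma path_step: "is_path s tr n \<Longrightarrow> enat j < n \<Longrightarrow> step (s j) (fst (tr j)) (snd (tr j)) (s (Suc j))"
  unfolding is_path_def by blast

lemma path_Inv: "wf_net (s 0) \<Longrightarrow> is_path s tr n \<Longrightarrow> enat j \<le> n \<Longrightarrow> Inv (s 0) (s j)"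
proof (induction j)
  case 0
  then show ?case using wf_Inv by blast
next
  case (Suc j)
  then have lt: "enat j < n" using Suc_ile_eq by blast
  then have "enat j \<le> n" by simp
  then have "Inv (s 0) (s j)" using Suc.IH Suc.prems(1,2) by blast
  moreover have "step (s j) (fst (tr j)) (snd (tr j)) (s (Suc j))" using path_step[OF Suc.prems(2) lt] .
  ultimately show ?case using step_Inv by blast
qed



lemma WI_to_just:
  assumes wf: "wf_net (s 0)" and path: "is_path s tr n" and WI: "WI_fair s tr n"
  shows "just s tr n"
  unfolding just_def
proof (intro allI impI)
  fix k a J N'
  assume k: "enat k \<le> n" and st: "step (s k) a J N'"
  show "\<exists>j\<ge>k. enat j < n \<and> comp (fst (tr j)) \<inter> comp a \<noteq> {}"
  proof (rule ccontr)
    assume "\<not> (\<exists>j\<ge>k. enat j < n \<and> comp (fst (tr j)) \<inter> comp a \<noteq> {})"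
    then have H: "\<And>j. k \<le> j \<Longrightarrow> enat j < n \<Longrightarrow> comp (fst (tr j)) \<inter> comp a = {}" by blast
    have fr: "enat (k + d) \<le> n \<Longrightarrow> \<forall>p\<in>comp a. s (k + d) p = s k p" for d
    proof (induction d)
      case 0
      then show ?case by simp
    next
      case (Suc d)
      then have lt: "enat (k + d) < n" using Suc_ile_eq by simp
      then have st': "step (s (k + d)) (fst (tr (k + d))) (snd (tr (k + d))) (s (Suc (k + d)))"
        using path_step[OF path] by blast
      have "enat (k + d) \<le> n" using lt by simp
      then have ih: "\<forall>p\<in>comp a. s (k + d) p = s k p" using Suc.IH by blast
      show ?case
      proof
        fix p assume pa: "p \<in> comp a"
        then have "p \<notin> comp (fst (tr (k + d)))" using H[of "k + d"] lt by auto
        then have "s (Suc (k + d)) p = s (k + d) p" using step_frame[OF st'] by blast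
        then show "s (k + Suc d) p = s k p" using ih pa by simp
      qed
    qed
    have en: "\<exists>M'. step (s j) a J M'" if "k \<le> j" "enat j \<le> n" for j
    proof -
      have jj: "k + (j - k) = j" using that(1) by simp
      have "\<forall>p\<in>comp a. s (k + (j - k)) p = s k p" using fr[of "j - k"] that(2) unfolding jj by blast
      then show ?thesis unfolding jj by (rule step_local[OF st])
    qed
    obtain I where I: "I \<in> J" using step_J[OF st] by blast
    have "perp_enabled s n k I"
      unfolding perp_enabled_def enabled_def using en I by blast
    then have "engaged tr n k I" using WI k unfolding WI_fair_def by blast
    then obtain j where j: "k \<le> j" "enat j < n" "I \<in> snd (tr j)" unfolding engaged_def by blast
    have stj: "step (s j) (fst (tr j)) (snd (tr j)) (s (Suc j))" using path_step[OF path j(2)] .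
    obtain p T where p: "p \<in> comp (fst (tr j))" "s j p = Some T" "I \<in> topT T"
      using step_instr[OF stj j(3)] by blast
    have "enat j \<le> n" using j(2) by simp
    then obtain M' where M': "step (s j) a J M'" using en j(1) by blast
    obtain p' T' where p': "p' \<in> comp a" "s j p' = Some T'" "I \<in> topT T'"
      using step_instr[OF M' I] by blast
    have inv: "Inv (s 0) (s j)" using path_Inv[OF wf path] j(2) by simp
    have t1: "I \<in> set (tags T)" using p(3) topT_tags[of T] by blast
    have t2: "I \<in> set (tags T')" using p'(3) topT_tags[of T'] by blast
    have "p = p'" by (rule uniq[OF wf inv inv p(2) p'(2) t1 t2])
    then show False using H[OF j(1,2)] p(1) p'(1) by blast
  qed
qed



lemma just_to_WI:
  assumes wf: "wf_net (s 0)" and path: "is_path s tr n" and JU: "just s tr n"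
  shows "WI_fair s tr n"
  unfolding WI_fair_def
proof (intro allI impI)
  fix k I
  assume k: "enat k \<le> n" and pe: "perp_enabled s n k I"
  show "engaged tr n k I"
  proof (rule ccontr)
    assume "\<not> engaged tr n k I"
    then have NE: "\<And>j. k \<le> j \<Longrightarrow> enat j < n \<Longrightarrow> I \<notin> snd (tr j)" unfolding engaged_def by blast
    have ninf: "n = \<infinity>"
    proof (rule ccontr)
      assume "n \<noteq> \<infinity>"
      then obtain m where m: "n = enat m" by (cases n) auto
      have "k \<le> m" using k m by simp
      moreover have "enat m \<le> n" using m by simp
      ultimately have "enabled I (s m)" using pe unfolding perp_enabled_def by blast
      then obtain a J N' where "step (s m) a J N'" unfolding enabled_def by blast
      then show False using path m unfolding is_path_def by blast
    qed
    have lt: "enat j < n" for j using ninf by simp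
    have stp: "step (s j) (fst (tr j)) (snd (tr j)) (s (Suc j))" for j
      using path_step[OF path lt] .
    have inv: "Inv (s 0) (s j)" for j using path_Inv[OF wf path] lt[of j] less_imp_le by blast
    have enab: "enabled I (s j)" if "k \<le> j" for j
      using pe that lt[of j] less_imp_le unfolding perp_enabled_def by blast
    have ju: "\<exists>j'\<ge>j. comp (fst (tr j')) \<inter> comp a \<noteq> {}" if "step (s j) a J N'" for j a J N'
    proof -
      have "enat j \<le> n" using lt[of j] less_imp_le by blast
      then show ?thesis using JU that unfolding just_def by blast
    qed
    have NE': "I \<notin> snd (tr j)" if "k \<le> j" for j using NE[OF that lt] .
    obtain a0 J0 N0' where st0: "step (s k) a0 J0 N0'" and IJ0: "I \<in> J0"
      using enab[of k] unfolding enabled_def by blast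
    obtain p T where p: "p \<in> comp a0" "s k p = Some T" "I \<in> topT T"
      using step_instr[OF st0 IJ0] by blast
    have IT: "I \<in> set (tags T)" using p(3) topT_tags[of T] by blast
    have locI: "p' = p" if "s j p' = Some T'" "I \<in> set (tags T')" for j p' T'
      using uniq[OF wf inv[of j] inv[of k] that(1) p(2) that(2) IT] .
    have keep: "p \<notin> comp (fst (tr j))" if kj: "k \<le> j" and sj: "s j p = Some T" for j
    proof
      assume pc: "p \<in> comp (fst (tr j))"
      obtain T' where T': "s (Suc j) p = Some T'" using step_some[OF stp pc] by blast
      have nt: "I \<notin> topT T'" using step_keep[OF stp[of j] inv[of j] sj p(3) NE'[OF kj] pc T'] .
      have "k \<le> Suc j" using kj by simp
      then obtain a' J' N'' where st': "step (s (Suc j)) a' J' N''" "I \<in> J'"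
        using enab unfolding enabled_def by blast
      obtain p' T'' where p': "p' \<in> comp a'" "s (Suc j) p' = Some T''" "I \<in> topT T''"
        using step_instr[OF st'] by blast
      have "I \<in> set (tags T'')" using p'(3) topT_tags[of T''] by blast
      then have "p' = p" using locI[OF p'(2)] by blast
      then show False using T' p' nt by simp
    qed
    have stay: "s (k + d) p = Some T" for d
    proof (induction d)
      case 0
      then show ?case using p(2) by simp
    next
      case (Suc d)
      have "p \<notin> comp (fst (tr (k + d)))" using keep[OF _ Suc.IH] by simp
      then have "s (Suc (k + d)) p = s (k + d) p" using step_frame[OF stp] by blast
      then show ?case using Suc.IH by simp
    qed
    have stay': "s j p = Some T" "p \<notin> comp (fst (tr j))" if "k \<le> j" for j
    proof -
      have jj: "k + (j - k) = j" using that by simp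
      show "s j p = Some T" using stay[of "j - k"] unfolding jj .
      then show "p \<notin> comp (fst (tr j))" using keep[OF that] by blast
    qed
    have tau: False if "comp a0 = {p}"
    proof -
      obtain j' where "j' \<ge> k" "comp (fst (tr j')) \<inter> comp a0 \<noteq> {}" using ju[OF st0] by blast
      then have "p \<notin> comp (fst (tr j'))" using stay'(2)[of j'] by blast
      then show False using \<open>comp (fst (tr j')) \<inter> comp a0 \<noteq> {}\<close> that by auto
    qed
    from st0 show False
    proof (cases rule: step.cases)
      case (choice p0 bs kk i q l P)
      then show False using tau p(1) by simp
    next
      case (unfold p0 i x P)
      then show False using tau p(1) by simp
    next
      case (comm p0 q0 i l Q bs kk j P)
      have pp: "p = p0 \<or> p = q0" using p(1) comm by simp
      show False
      proof (cases "p = p0")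
        case True
        have TT: "T = Snd i q0 l Q" using comm True p(2) by simp
        have qp: "q0 \<noteq> p" using comm True by simp
        have brn: "\<exists>bs' a' J' N''. s j q0 = Some (Brn bs') \<and> step (s j) a' J' N'' \<and> comp a' = {p, q0}"
          if kj: "k \<le> j" for j
        proof -
          obtain a' J' N'' where st': "step (s j) a' J' N''" "I \<in> J'"
            using enab[OF kj] unfolding enabled_def by blast
          obtain p' T' where p': "p' \<in> comp a'" "s j p' = Some T'" "I \<in> topT T'"
            using step_instr[OF st'] by blast
          have "I \<in> set (tags T')" using p'(3) topT_tags[of T'] by blast
          then have pp': "p' = p" using locI[OF p'(2)] by blast
          have sjp: "s j p = Some (Snd i q0 l Q)" using stay'(1)[OF kj] TT by simp
          from st'(1) show ?thesis
          proof (cases rule: step.cases)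
            case (choice p1 bs1 k1 i1 q1 l1 P1)
            then show ?thesis using p'(1) pp' sjp by auto
          next
            case (unfold p1 i1 x1 P1)
            then show ?thesis using p'(1) pp' sjp by auto
          next
            case (comm p1 q1 i1 l1 Q1 bs1 k1 j1 P1)
            have "p = p1 \<or> p = q1" using p'(1) pp' comm by simp
            moreover have "p \<noteq> q1" using comm sjp by auto
            ultimately have "p = p1" by blast
            then have "q1 = q0" using comm sjp by simp
            then have ca: "comp a' = {p, q0}" using comm \<open>p = p1\<close> by simp
            have "s j q0 = Some (Brn bs1)" using comm \<open>q1 = q0\<close> by simp
            then show ?thesis using st'(1) ca by blast
          qed
        qed
        define f where "f j = size (the (s j q0))" for j
        have dec: "f (Suc j) < f j" if kj: "k \<le> j" and qc: "q0 \<in> comp (fst (tr j))" for j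
        proof -
          obtain bs' where b: "s j q0 = Some (Brn bs')" using brn[OF kj] by blast
          obtain P' where "s (Suc j) q0 = Some P'" "size P' < size (Brn bs')"
            using recv_move[OF stp b qc] by blast
          then show ?thesis using b unfolding f_def by simp
        qed
        have mono1: "f (Suc j) \<le> f j" if kj: "k \<le> j" for j
        proof (cases "q0 \<in> comp (fst (tr j))")
          case True
          then show ?thesis using dec[OF kj] by simp
        next
          case False
          then show ?thesis using step_frame[OF stp False] unfolding f_def by simp
        qed
        have monoN: "f (j + d) \<le> f j" if kj: "k \<le> j" for j d
        proof (induction d)
          case 0
          then show ?case by simp
        next
          case (Suc d)
          have "f (Suc (j + d)) \<le> f (j + d)" using mono1[of "j + d"] kj by simp
          then show ?case using Suc.IH by simp
        qed
        have ex: "\<exists>j'\<ge>j. f (Suc j') < f j'" if kj: "k \<le> j" for j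
        proof -
          obtain bs' a' J' N'' where b: "s j q0 = Some (Brn bs')" "step (s j) a' J' N''" "comp a' = {p, q0}"
            using brn[OF kj] by blast
          obtain j' where j': "j' \<ge> j" "comp (fst (tr j')) \<inter> comp a' \<noteq> {}" using ju[OF b(2)] by blast
          have kj': "k \<le> j'" using kj j'(1) by simp
          have "p \<notin> comp (fst (tr j'))" using stay'(2)[OF kj'] .
          then have "q0 \<in> comp (fst (tr j'))" using j'(2) b(3) by auto
          then show ?thesis using dec[OF kj'] j'(1) by blast
        qed
        have big: "\<exists>j\<ge>k. f j + m \<le> f k" for m
        proof (induction m)
          case 0
          then show ?case by auto
        next
          case (Suc m)
          then obtain j where j: "j \<ge> k" "f j + m \<le> f k" by blast
          obtain j' where j': "j' \<ge> j" "f (Suc j') < f j'" using ex[OF j(1)] by blast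
          have "f (j + (j' - j)) \<le> f j" using monoN[OF j(1)] .
          then have "f j' \<le> f j" using j'(1) by simp
          then have "f (Suc j') + Suc m \<le> f k" using j(2) j'(2) by simp
          moreover have "Suc j' \<ge> k" using j(1) j'(1) by simp
          ultimately show ?case by blast
        qed
        obtain j where "f j + Suc (f k) \<le> f k" using big by blast
        then show False by simp
      next
        case False
        then have pq: "p = q0" using pp by blast
        have pq0: "p0 \<noteq> q0" using comm by simp
        define Pj where "Pj j \<longleftrightarrow> k \<le> j \<and> comp (fst (tr j)) \<inter> {p0, q0} \<noteq> {}" for j
        have "\<exists>j. Pj j" using ju[OF st0] comm unfolding Pj_def by auto
        define j0 where "j0 = (LEAST j. Pj j)"
        have P0: "Pj j0" unfolding j0_def using \<open>\<exists>j. Pj j\<close> by (rule LeastI_ex)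
        have nl: "\<not> Pj j" if "j < j0" for j using not_less_Least[of j Pj] that unfolding j0_def by blast
        have kj0: "k \<le> j0" using P0 unfolding Pj_def by blast
        have unch: "k + d \<le> j0 \<Longrightarrow> s (k + d) p0 = s k p0" for d
        proof (induction d)
          case 0
          then show ?case by simp
        next
          case (Suc d)
          then have "k + d < j0" by simp
          then have "\<not> Pj (k + d)" using nl by blast
          then have "p0 \<notin> comp (fst (tr (k + d)))" unfolding Pj_def by auto
          then have "s (Suc (k + d)) p0 = s (k + d) p0" using step_frame[OF stp] by blast
          then show ?case using Suc by simp
        qed
        have jj: "k + (j0 - k) = j0" using kj0 by simp
        have "s j0 p0 = s k p0" using unch[of "j0 - k"] unfolding jj by blast
        then have sj0: "s j0 p0 = Some (Snd i q0 l Q)" using comm by simp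
        have "q0 \<notin> comp (fst (tr j0))" using stay'(2)[OF kj0] pq by simp
        then have "p0 \<in> comp (fst (tr j0))" using P0 unfolding Pj_def by auto
        then have "q0 \<in> comp (fst (tr j0))" using snd_move[OF stp sj0] by blast
        then show False using \<open>q0 \<notin> comp (fst (tr j0))\<close> by blast
      qed
    qed
  qed
qed


theorem mainTheorem15:
  fixes s :: "nat \<Rightarrow> ('p, 'l, 't) net"
    and tr :: "nat \<Rightarrow> ('p, 'l) act \<times> 't set"
    and n :: enat
  assumes "wf_net (s 0)"
    and "is_path s tr n"
  shows "WI_fair s tr n \<longleftrightarrow> just s tr n"
  using WI_to_just[OF assms] just_to_WI[OF assms] by blast

end
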